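(* Let $C$ be a TDD respecting a vtree $T$, and let $h,h'$ be two twin $t_1$-nodes of $C$ for some non-root node $t_1$ of $T$. Then the circuit obtained from $C$ by contracting $h$ and $h'$ is again a TDD respecting $T$ and computes the same Boolean function as $C$.
   Context: A vtree over $X$ is a rooted tree whose internal nodes have exactly two ordered children and whose leaves are labeled bijectively by $X$; $X_t$ is the set of variables below node $t$. An nTDD $C=(N,E)$ respecting $T$ has nodes $N=\biguplus_t N_t$ ($t$-nodes); leaf $t$-nodes (leaf labeled $x$) carry a label in $\{x,\neg x,1,0\}$ and compute that literal/constant; an internal $t$-node $g$ with children $t_1,t_2$ has inputs $E(g)\subseteq N_{t_1}\times N_{t_2}$ and computes $f_g=\bigvee_{(g_1,g_2)\in E(g)}(f_{g_1}\wedge f_{g_2})$ over $X_t$ (false if $E(g)=\emptyset$); the distinguished root-node $\mathrm{out}$ gives $f_C=f_{\mathrm{out}}$. A TDD is an nTDD such that for every leaf $t$ labeled $x$, $N_t$ has at most one node labeled $x$, at most one labeled $\neg x$, at most one labeled $1$, and if one is labeled $1$ all others are labeled $0$; and for every internal $t$, distinct $t$-nodes have disjoint input sets. Twins: let $t_1$ be a non-root node of $T$ with parent $t$ and sibling $t_2$. For a $t_1$-node $h$ and a $t$-node $g$, $\mathrm{sib}_g(h)$ is the set of $t_2$-nodes $h_2$ such that the pair formed by $h$ and $h_2$ (in the order of the children of $t$) belongs to $E(g)$. Distinct $t_1$-nodes $h,h'$ are twins if $\mathrm{sib}_g(h)=\mathrm{sib}_g(h')$ for every $t$-node $g$. Contracting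 twins $h,h'$: replace them by a new $t_1$-node $v$ with $E(v)=E(h)\cup E(h')$ (so that $f_v=f_h\vee f_{h'}$); for every $t$-node $g$, replace each pair in $E(g)$ containing $h$ by the same pair with $v$ in place of $h$, and remove each pair containing $h'$. *)

theory Defs
  imports Main
begin

text \<open>A vtree: rooted binary tree with ordered children, leaves labelled by variables.
  Nodes of a vtree are identified with its subtrees (unambiguous since leaf labels are distinct).\<close>

datatype 'x vtree = Leaf 'x | Node "'x vtree" "'x vtree"

primrec vars :: "'x vtree \<Rightarrow> 'x set" where
  "vars (Leaf x) = {x}"
| "vars (Node l r) = vars l \<union> vars r"

primrec valid_vtree :: "'x vtree \<Rightarrow> bool" where
  "valid_vtree (Leaf x) = True"
| "valid_vtree (Node l r) = (valid_vtree l \<and> valid_vtree r \<and> vars l \<inter> vars r = {})"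

primrec subtrees :: "'x vtree \<Rightarrow> 'x vtree set" where
  "subtrees (Leaf x) = {Leaf x}"
| "subtrees (Node l r) = insert (Node l r) (subtrees l \<union> subtrees r)"

text \<open>Leaf labels, relative to the variable x of the leaf: x, not x, 1, 0.\<close>
datatype lit = Pos | Neg | One | Zero

record ('x, 'n) ntdd =
  nodes :: "'n set"
  tn    :: "'n \<Rightarrow> 'x vtree"          \<comment> \<open>the vtree node t such that g is a t-node\<close>
  lab   :: "'n \<Rightarrow> lit"              \<comment> \<open>label (meaningful for leaf t-nodes)\<close>
  inp   :: "'n \<Rightarrow> ('n \<times> 'n) set"
  out   :: "'n"

definition ntdd_respects :: "'x vtree \<Rightarrow> ('x, 'n) ntdd \<Rightarrow> bool" where
  "ntdd_respects T C \<longleftrightarrow>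
     valid_vtree T \<and> finite (nodes C) \<and> out C \<in> nodes C \<and> tn C (out C) = T \<and>
     (\<forall>g\<in>nodes C. tn C g \<in> subtrees T) \<and>
     (\<forall>g\<in>nodes C. (case tn C g of
         Leaf x \<Rightarrow> inp C g = {}
       | Node t1 t2 \<Rightarrow> inp C g \<subseteq> {g1\<in>nodes C. tn C g1 = t1} \<times> {g2\<in>nodes C. tn C g2 = t2}))"

primrec val :: "('x, 'n) ntdd \<Rightarrow> 'x vtree \<Rightarrow> 'n \<Rightarrow> ('x \<Rightarrow> bool) \<Rightarrow> bool" where
  "val C (Leaf x) g a = (case lab C g of Pos \<Rightarrow> a x | Neg \<Rightarrow> \<not> a x | One \<Rightarrow> True | Zero \<Rightarrow> False)"
| "val C (Node t1 t2) g a = (\<exists>(g1, g2)\<in>inp C g. val C t1 g1 a \<and> val C t2 g2 a)"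

definition fnode :: "('x, 'n) ntdd \<Rightarrow> 'n \<Rightarrow> ('x \<Rightarrow> bool) \<Rightarrow> bool" where
  "fnode C g = val C (tn C g) g"

definition fcirc :: "('x, 'n) ntdd \<Rightarrow> ('x \<Rightarrow> bool) \<Rightarrow> bool" where
  "fcirc C = fnode C (out C)"

definition is_TDD :: "'x vtree \<Rightarrow> ('x, 'n) ntdd \<Rightarrow> bool" where
  "is_TDD T C \<longleftrightarrow> ntdd_respects T C \<and>
     (\<forall>t\<in>subtrees T. (case t of
        Leaf x \<Rightarrow>
          (\<forall>l\<in>{Pos, Neg, One}. \<forall>g\<in>nodes C. \<forall>g'\<in>nodes C.
              tn C g = t \<and> tn C g' = t \<and> lab C g = l \<and> lab C g' = l \<longrightarrow> g = g') \<and>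
          ((\<exists>g\<in>nodes C. tn C g = t \<and> lab C g = One) \<longrightarrow>
              (\<forall>g\<in>nodes C. tn C g = t \<and> lab C g \<noteq> One \<longrightarrow> lab C g = Zero))
      | Node t1 t2 \<Rightarrow>
          (\<forall>g\<in>nodes C. \<forall>g'\<in>nodes C.
              tn C g = t \<and> tn C g' = t \<and> g \<noteq> g' \<longrightarrow> inp C g \<inter> inp C g' = {})))"

definition sib :: "('x, 'n) ntdd \<Rightarrow> 'n \<Rightarrow> 'n \<Rightarrow> 'n set" where
  "sib C g h = (case tn C g of
       Leaf _ \<Rightarrow> {}
     | Node l r \<Rightarrow> if tn C h = l then {h2. (h, h2) \<in> inp C g} else {h2. (h2, h) \<in> inp C g})"

definition twins :: "('x, 'n) ntdd \<Rightarrow> 'x vtree \<Rightarrow> 'n \<Rightarrow> 'n \<Rightarrow> bool" where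
  "twins C t1 h h' \<longleftrightarrow>
     h \<in> nodes C \<and> h' \<in> nodes C \<and> h \<noteq> h' \<and> tn C h = t1 \<and> tn C h' = t1 \<and>
     (\<forall>g\<in>nodes C. (\<exists>t2. tn C g = Node t1 t2 \<or> tn C g = Node t2 t1) \<longrightarrow>
          sib C g h = sib C g h')"

fun lit_or :: "lit \<Rightarrow> lit \<Rightarrow> lit" where
  "lit_or Zero l = l"
| "lit_or l Zero = l"
| "lit_or One _ = One"
| "lit_or _ One = One"
| "lit_or Pos Pos = Pos"
| "lit_or Neg Neg = Neg"
| "lit_or _ _ = One"

text \<open>Contraction of h and h': the new node v reuses the name h; h' is deleted.
  E(v) = E(h) \<union> E(h'); pairs containing h' are removed elsewhere (pairs containing h
  now refer to v). For leaf t1-nodes, v gets the label of f_h \<or> f_h'.\<close>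
definition contract :: "('x, 'n) ntdd \<Rightarrow> 'n \<Rightarrow> 'n \<Rightarrow> ('x, 'n) ntdd" where
  "contract C h h' = C\<lparr> nodes := nodes C - {h'},
       lab := (lab C)(h := lit_or (lab C h) (lab C h')),
       inp := (\<lambda>g. if g = h then inp C h \<union> inp C h'
                   else {p \<in> inp C g. fst p \<noteq> h' \<and> snd p \<noteq> h'}) \<rparr>"

end

theory Submission
  imports Defs
begin

lemma valid_sub: "valid_vtree T \<Longrightarrow> s \<in> subtrees T \<Longrightarrow> valid_vtree s"
  by (induction T) auto

lemma vars_ne: "vars t \<noteq> {}"
  by (induction t) auto

lemma valid_node_neq: "valid_vtree (Node l r) \<Longrightarrow> l \<noteq> r"
  using vars_ne[of l] by auto

lemma lit_or_sem:
  "(case lit_or a b of Pos \<Rightarrow> v | Neg \<Rightarrow> \<not> v | One \<Rightarrow> True | Zero \<Rightarrow> False) =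
   ((case a of Pos \<Rightarrow> v | Neg \<Rightarrow> \<not> v | One \<Rightarrow> True | Zero \<Rightarrow> False) \<or>
    (case b of Pos \<Rightarrow> v | Neg \<Rightarrow> \<not> v | One \<Rightarrow> True | Zero \<Rightarrow> False))"
  by (cases a; cases b) auto

lemma contract_simps:
  "nodes (contract C h h') = nodes C - {h'}"
  "tn (contract C h h') = tn C"
  "lab (contract C h h') = (lab C)(h := lit_or (lab C h) (lab C h'))"
  "inp (contract C h h') g = (if g = h then inp C h \<union> inp C h'
                   else {p \<in> inp C g. fst p \<noteq> h' \<and> snd p \<noteq> h'})"
  "out (contract C h h') = out C"
  by (simp_all add: contract_def)

lemma tw_l:
  assumes "twins C t1 h h'" "g \<in> nodes C" "tn C g = Node t1 r"
  shows "(h,x) \<in> inp C g \<longleftrightarrow> (h',x) \<in> inp C g"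
proof -
  have "sib C g h = sib C g h'" using assms unfolding twins_def by blast
  moreover have "tn C h = t1" "tn C h' = t1" using assms(1) unfolding twins_def by auto
  ultimately show ?thesis using assms(3) unfolding sib_def by auto
qed

lemma tw_r:
  assumes "twins C t1 h h'" "g \<in> nodes C" "tn C g = Node l t1" "l \<noteq> t1"
  shows "(x,h) \<in> inp C g \<longleftrightarrow> (x,h') \<in> inp C g"
proof -
  have "sib C g h = sib C g h'" using assms unfolding twins_def by blast
  moreover have "tn C h = t1" "tn C h' = t1" using assms(1) unfolding twins_def by auto
  ultimately show ?thesis using assms(3,4) unfolding sib_def by auto
qed

lemma resp_inp:
  assumes "ntdd_respects T C" "g \<in> nodes C" "tn C g = Node l r" "p \<in> inp C g"
  shows "fst p \<in> nodes C \<and> tn C (fst p) = l \<and> snd p \<in> nodes C \<and> tn C (snd p) = r"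
  using assms unfolding ntdd_respects_def by (force split: vtree.splits)

lemma resp_valid:
  assumes "ntdd_respects T C" "g \<in> nodes C"
  shows "valid_vtree (tn C g)"
  using assms valid_sub unfolding ntdd_respects_def by blast

lemma val_contract:
  assumes resp: "ntdd_respects T C" and tw: "twins C t1 h h'"
  shows "\<forall>g \<in> nodes C - {h'}. tn C g = t \<longrightarrow> val (contract C h h') t g a =
     (if g = h then val C t h a \<or> val C t h' a else val C t g a)"
proof (induction t)
  case (Leaf x)
  show ?case by (auto simp: contract_simps lit_or_sem)
next
  case (Node l r)
  have th: "tn C h = t1" "tn C h' = t1" "h \<in> nodes C" "h' \<in> nodes C" "h \<noteq> h'"
    using tw unfolding twins_def by auto
  show ?case
  proof (intro ballI impI)
    fix g assume g: "g \<in> nodes C - {h'}" "tn C g = Node l r"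
    have lr: "l \<noteq> r" using resp_valid[OF resp, of g] g valid_node_neq by auto
    have mem: "\<And>p. p \<in> inp C g \<Longrightarrow> fst p \<in> nodes C \<and> tn C (fst p) = l \<and> snd p \<in> nodes C \<and> tn C (snd p) = r"
      using resp_inp[OF resp, of g] g by blast
    show "val (contract C h h') (Node l r) g a =
     (if g = h then val C (Node l r) h a \<or> val C (Node l r) h' a else val C (Node l r) g a)"
    proof (cases "g = h")
      case True
      have memh': "\<And>p. p \<in> inp C h' \<Longrightarrow> fst p \<in> nodes C \<and> tn C (fst p) = l \<and> snd p \<in> nodes C \<and> tn C (snd p) = r"
        using resp_inp[OF resp, of h'] g th True by auto
      have ne: "l \<noteq> t1" "r \<noteq> t1" using g th True by auto
      have A: "\<And>p. p \<in> inp C h \<union> inp C h' \<Longrightarrow> val (contract C h h') l (fst p) a = val C l (fst p) a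
          \<and> val (contract C h h') r (snd p) a = val C r (snd p) a"
      proof -
        fix p assume p: "p \<in> inp C h \<union> inp C h'"
        then have "fst p \<in> nodes C \<and> tn C (fst p) = l \<and> snd p \<in> nodes C \<and> tn C (snd p) = r"
          using mem memh' True by blast
        then show "val (contract C h h') l (fst p) a = val C l (fst p) a
          \<and> val (contract C h h') r (snd p) a = val C r (snd p) a"
          using Node.IH ne th by (metis Diff_iff singletonD)
      qed
      have "val (contract C h h') (Node l r) h a = (\<exists>p\<in>inp C h \<union> inp C h'. val C l (fst p) a \<and> val C r (snd p) a)"
        using A True by (simp add: contract_simps split_def)
      then show ?thesis using True by (auto simp: split_def)
    next
      case False
      have L: "\<And>g1 g2. (g1,g2) \<in> inp C g \<Longrightarrow> g1 \<noteq> h' \<Longrightarrow> g2 \<noteq> h' \<Longrightarrow>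
          val (contract C h h') l g1 a = (if g1 = h then val C l h a \<or> val C l h' a else val C l g1 a) \<and>
          val (contract C h h') r g2 a = (if g2 = h then val C r h a \<or> val C r h' a else val C r g2 a)"
      proof -
        fix g1 g2 assume p: "(g1,g2) \<in> inp C g" "g1 \<noteq> h'" "g2 \<noteq> h'"
        have "g1 \<in> nodes C - {h'}" "tn C g1 = l" "g2 \<in> nodes C - {h'}" "tn C g2 = r"
          using mem[OF p(1)] p(2,3) by auto
        then show "val (contract C h h') l g1 a = (if g1 = h then val C l h a \<or> val C l h' a else val C l g1 a) \<and>
          val (contract C h h') r g2 a = (if g2 = h then val C r h a \<or> val C r h' a else val C r g2 a)"
          using Node.IH by blast
      qed
      have TL: "\<And>x. l = t1 \<Longrightarrow> (h,x) \<in> inp C g \<longleftrightarrow> (h',x) \<in> inp C g"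
        using tw_l[OF tw] g by auto
      have TR: "\<And>x. r = t1 \<Longrightarrow> (x,h) \<in> inp C g \<longleftrightarrow> (x,h') \<in> inp C g"
        using tw_r[OF tw] g lr by auto
      show ?thesis
      proof -
        have "val (contract C h h') (Node l r) g a = val C (Node l r) g a"
        proof
          assume "val (contract C h h') (Node l r) g a"
          then obtain g1 g2 where p: "(g1,g2) \<in> inp C g" "g1 \<noteq> h'" "g2 \<noteq> h'"
            "val (contract C h h') l g1 a" "val (contract C h h') r g2 a"
            using False by (auto simp: contract_simps)
          note LL = L[OF p(1-3)]
          have m: "tn C g1 = l" "tn C g2 = r" using mem[OF p(1)] by auto
          show "val C (Node l r) g a"
          proof (cases "g1 = h")
            case True
            then have g2h: "g2 \<noteq> h" using m lr th by auto
            from True LL p(4) have "val C l h a \<or> val C l h' a" by simp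
            moreover have "(h',g2) \<in> inp C g" using TL True m th p(1) by auto
            ultimately show ?thesis using p True LL g2h by auto
          next
            case g1: False
            show ?thesis
            proof (cases "g2 = h")
              case True
              from True LL p(5) have "val C r h a \<or> val C r h' a" by simp
              moreover have "(g1,h') \<in> inp C g" using TR True m th p(1) by auto
              ultimately show ?thesis using p True LL g1 by auto
            next
              case False
              then show ?thesis using p LL g1 by auto
            qed
          qed
        next
          assume "val C (Node l r) g a"
          then obtain g1 g2 where p: "(g1,g2) \<in> inp C g"
            "val C l g1 a" "val C r g2 a" by auto
          have m: "tn C g1 = l" "tn C g2 = r" using mem[OF p(1)] by auto
          show "val (contract C h h') (Node l r) g a"
          proof (cases "g1 = h \<or> g1 = h'")
            case True
            then have "(h,g2) \<in> inp C g" "(h',g2) \<in> inp C g" using TL m th p(1) by auto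
            moreover have "g2 \<noteq> h" "g2 \<noteq> h'" using m lr th True by auto
            ultimately show ?thesis using L[of h g2] p True False th
              by (auto simp: contract_simps)
          next
            case g1: False
            show ?thesis
            proof (cases "g2 = h \<or> g2 = h'")
              case True
              then have "(g1,h) \<in> inp C g" "(g1,h') \<in> inp C g" using TR m th p(1) by auto
              then show ?thesis using L[of g1 h] p True False th g1
                by (auto simp: contract_simps)
            next
              case False
              then show ?thesis using L[of g1 g2] p g1 \<open>g \<noteq> h\<close>
                by (auto simp: contract_simps)
            qed
          qed
        qed
        then show ?thesis using False by simp
      qed
    qed
  qed
qed


lemma lit_or_cases:
  "lit_or a b = One \<longleftrightarrow> a = One \<or> b = One \<or> (a = Pos \<and> b = Neg) \<or> (a = Neg \<and> b = Pos)"
  "lit_or a b = Pos \<longleftrightarrow> (a = Pos \<and> (b = Pos \<or> b = Zero)) \<or> (a = Zero \<and> b = Pos)"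
  "lit_or a b = Neg \<longleftrightarrow> (a = Neg \<and> (b = Neg \<or> b = Zero)) \<or> (a = Zero \<and> b = Neg)"
  "lit_or a b = Zero \<longleftrightarrow> a = Zero \<and> b = Zero"
  by (cases a; cases b; simp)+

theorem lemma5:
  fixes T :: "'x vtree" and C :: "('x, 'n) ntdd" and t1 :: "'x vtree" and h h' :: 'n
  assumes "is_TDD T C"
    and "t1 \<in> subtrees T" and "t1 \<noteq> T"
    and "twins C t1 h h'"
  shows "is_TDD T (contract C h h') \<and> fcirc (contract C h h') = fcirc C"
proof -
  let ?C = "contract C h h'"
  have resp: "ntdd_respects T C" using assms(1) unfolding is_TDD_def by blast
  have tw: "twins C t1 h h'" by fact
  have th: "tn C h = t1" "tn C h' = t1" "h \<in> nodes C" "h' \<in> nodes C" "h \<noteq> h'"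
    using tw unfolding twins_def by auto
  have R: "valid_vtree T" "finite (nodes C)" "out C \<in> nodes C" "tn C (out C) = T"
    "\<forall>g\<in>nodes C. tn C g \<in> subtrees T"
    "\<forall>g\<in>nodes C. (case tn C g of
         Leaf x \<Rightarrow> inp C g = {}
       | Node t1 t2 \<Rightarrow> inp C g \<subseteq> {g1\<in>nodes C. tn C g1 = t1} \<times> {g2\<in>nodes C. tn C g2 = t2})"
    using resp unfolding ntdd_respects_def by auto
  have outh: "out C \<noteq> h" "out C \<noteq> h'" using R(4) th assms(3) by auto
  have f: "fcirc ?C = fcirc C"
  proof
    fix a
    have "val ?C T (out C) a = val C T (out C) a"
      using val_contract[OF resp tw, of T a] R(3,4) outh by auto
    then show "fcirc ?C a = fcirc C a"
      unfolding fcirc_def fnode_def by (simp add: contract_simps R(4))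
  qed
  have resp': "ntdd_respects T ?C"
    unfolding ntdd_respects_def
  proof (intro conjI ballI)
    show "valid_vtree T" "finite (nodes ?C)" "out ?C \<in> nodes ?C" "tn ?C (out ?C) = T"
      using R outh by (auto simp: contract_simps)
    fix g assume g: "g \<in> nodes ?C"
    then show "tn ?C g \<in> subtrees T" using R(5) by (auto simp: contract_simps)
    show "case tn ?C g of Leaf x \<Rightarrow> inp ?C g = {}
       | Node t1 t2 \<Rightarrow> inp ?C g \<subseteq> {g1\<in>nodes ?C. tn ?C g1 = t1} \<times> {g2\<in>nodes ?C. tn ?C g2 = t2}"
    proof (cases "tn C g")
      case (Leaf x)
      then show ?thesis using R(6) g th by (auto simp: contract_simps split: vtree.splits)
    next
      case (Node l r)
      show ?thesis
      proof (cases "g = h")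
        case True
        have ne: "l \<noteq> t1" "r \<noteq> t1" using Node th True by auto
        have "inp C h \<union> inp C h' \<subseteq> {g1\<in>nodes C. tn C g1 = l} \<times> {g2\<in>nodes C. tn C g2 = r}"
          using R(6) th Node True by (auto split: vtree.splits)
        then show ?thesis using Node True ne th by (auto simp: contract_simps)
      next
        case False
        have "inp C g \<subseteq> {g1\<in>nodes C. tn C g1 = l} \<times> {g2\<in>nodes C. tn C g2 = r}"
          using R(6) g Node by (auto simp: contract_simps split: vtree.splits)
        then show ?thesis using Node False by (auto simp: contract_simps)
      qed
    qed
  qed
  have TD: "\<forall>t\<in>subtrees T. (case t of
        Leaf x \<Rightarrow>
          (\<forall>l\<in>{Pos, Neg, One}. \<forall>g\<in>nodes C. \<forall>g'\<in>nodes C.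
              tn C g = t \<and> tn C g' = t \<and> lab C g = l \<and> lab C g' = l \<longrightarrow> g = g') \<and>
          ((\<exists>g\<in>nodes C. tn C g = t \<and> lab C g = One) \<longrightarrow>
              (\<forall>g\<in>nodes C. tn C g = t \<and> lab C g \<noteq> One \<longrightarrow> lab C g = Zero))
      | Node t1 t2 \<Rightarrow>
          (\<forall>g\<in>nodes C. \<forall>g'\<in>nodes C.
              tn C g = t \<and> tn C g' = t \<and> g \<noteq> g' \<longrightarrow> inp C g \<inter> inp C g' = {}))"
    using assms(1) unfolding is_TDD_def by blast
  have TD': "\<forall>t\<in>subtrees T. (case t of
        Leaf x \<Rightarrow>
          (\<forall>l\<in>{Pos, Neg, One}. \<forall>g\<in>nodes ?C. \<forall>g'\<in>nodes ?C.
              tn ?C g = t \<and> tn ?C g' = t \<and> lab ?C g = l \<and> lab ?C g' = l \<longrightarrow> g = g') \<and>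
          ((\<exists>g\<in>nodes ?C. tn ?C g = t \<and> lab ?C g = One) \<longrightarrow>
              (\<forall>g\<in>nodes ?C. tn ?C g = t \<and> lab ?C g \<noteq> One \<longrightarrow> lab ?C g = Zero))
      | Node t1 t2 \<Rightarrow>
          (\<forall>g\<in>nodes ?C. \<forall>g'\<in>nodes ?C.
              tn ?C g = t \<and> tn ?C g' = t \<and> g \<noteq> g' \<longrightarrow> inp ?C g \<inter> inp ?C g' = {}))"
  proof
    fix t assume t: "t \<in> subtrees T"
    show "case t of
        Leaf x \<Rightarrow>
          (\<forall>l\<in>{Pos, Neg, One}. \<forall>g\<in>nodes ?C. \<forall>g'\<in>nodes ?C.
              tn ?C g = t \<and> tn ?C g' = t \<and> lab ?C g = l \<and> lab ?C g' = l \<longrightarrow> g = g') \<and>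
          ((\<exists>g\<in>nodes ?C. tn ?C g = t \<and> lab ?C g = One) \<longrightarrow>
              (\<forall>g\<in>nodes ?C. tn ?C g = t \<and> lab ?C g \<noteq> One \<longrightarrow> lab ?C g = Zero))
      | Node t1 t2 \<Rightarrow>
          (\<forall>g\<in>nodes ?C. \<forall>g'\<in>nodes ?C.
              tn ?C g = t \<and> tn ?C g' = t \<and> g \<noteq> g' \<longrightarrow> inp ?C g \<inter> inp ?C g' = {})"
    proof (cases t)
      case (Leaf x)
      have U: "\<And>l g g'. l \<in> {Pos, Neg, One} \<Longrightarrow> g \<in> nodes C \<Longrightarrow> g' \<in> nodes C \<Longrightarrow>
              tn C g = t \<Longrightarrow> tn C g' = t \<Longrightarrow> lab C g = l \<Longrightarrow> lab C g' = l \<Longrightarrow> g = g'"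
        and O: "\<And>g g'. g \<in> nodes C \<Longrightarrow> tn C g = t \<Longrightarrow> lab C g = One \<Longrightarrow>
              g' \<in> nodes C \<Longrightarrow> tn C g' = t \<Longrightarrow> lab C g' \<noteq> One \<Longrightarrow> lab C g' = Zero"
        using bspec[OF TD t] Leaf by (simp; blast)+
      show ?thesis
      proof (cases "t = t1")
        case False
        then have E: "\<And>g. g \<in> nodes ?C \<Longrightarrow> tn ?C g = t \<Longrightarrow> g \<in> nodes C \<and> tn C g = t \<and> lab ?C g = lab C g"
          using th by (auto simp: contract_simps)
        show ?thesis unfolding Leaf vtree.case
        proof (intro conjI ballI impI)
          fix l g g' assume a: "l \<in> {Pos, Neg, One}" "g \<in> nodes ?C" "g' \<in> nodes ?C"
            "tn ?C g = Leaf x \<and> tn ?C g' = Leaf x \<and> lab ?C g = l \<and> lab ?C g' = l"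
          then have "g \<in> nodes C \<and> tn C g = t \<and> lab ?C g = lab C g"
             "g' \<in> nodes C \<and> tn C g' = t \<and> lab ?C g' = lab C g'" using E Leaf by auto
          then have "lab C g = l" "lab C g' = l" "g \<in> nodes C" "g' \<in> nodes C" "tn C g = t" "tn C g' = t"
            using a(4) by simp_all
          then show "g = g'" using U[of l g g'] a(1) by blast
        next
          assume "\<exists>g\<in>nodes ?C. tn ?C g = Leaf x \<and> lab ?C g = One"
          then obtain g0 where g0: "g0 \<in> nodes ?C" "tn ?C g0 = Leaf x" "lab ?C g0 = One" by blast
          then have e0: "g0 \<in> nodes C \<and> tn C g0 = t \<and> lab ?C g0 = lab C g0" using E Leaf by auto
          fix g assume a: "g \<in> nodes ?C" "tn ?C g = Leaf x \<and> lab ?C g \<noteq> One"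
          then have "g \<in> nodes C \<and> tn C g = t \<and> lab ?C g = lab C g" using E Leaf by auto
          then have "lab C g \<noteq> One" "g \<in> nodes C" "tn C g = t" "lab ?C g = lab C g"
            using a(2) by simp_all
          moreover have "lab C g0 = One" using e0 g0(3) by simp
          ultimately show "lab ?C g = Zero" using O[of g0 g] e0 by simp
        qed
      next
        case True
        have u1: "\<And>l g. l \<in> {Pos, Neg, One} \<Longrightarrow> g \<in> nodes C \<Longrightarrow> tn C g = t \<Longrightarrow>
            lab C g = l \<Longrightarrow> lab C h = l \<Longrightarrow> g = h" using U th True by blast
        have u2: "\<And>l g. l \<in> {Pos, Neg, One} \<Longrightarrow> g \<in> nodes C \<Longrightarrow> tn C g = t \<Longrightarrow>
            lab C g = l \<Longrightarrow> lab C h' = l \<Longrightarrow> g = h'" using U th True by blast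
        have o1: "\<And>g. g \<in> nodes C \<Longrightarrow> tn C g = t \<Longrightarrow> lab C h = One \<Longrightarrow> lab C g \<noteq> One \<Longrightarrow> lab C g = Zero"
          using O th True by blast
        have o2: "\<And>g. g \<in> nodes C \<Longrightarrow> tn C g = t \<Longrightarrow> lab C h' = One \<Longrightarrow> lab C g \<noteq> One \<Longrightarrow> lab C g = Zero"
          using O th True by blast
        have o3: "\<And>g g'. g \<in> nodes C \<Longrightarrow> tn C g = t \<Longrightarrow> lab C g = One \<Longrightarrow> g' \<in> nodes C \<Longrightarrow> tn C g' = t \<Longrightarrow> lab C g' \<noteq> One \<Longrightarrow> lab C g' = Zero"
          using O by blast
        have A: "\<forall>l\<in>{Pos, Neg, One}. \<forall>g\<in>nodes ?C. \<forall>g'\<in>nodes ?C.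
              tn ?C g = t \<and> tn ?C g' = t \<and> lab ?C g = l \<and> lab ?C g' = l \<longrightarrow> g = g'"
        proof (intro ballI impI)
          fix l g g' assume l: "l \<in> {Pos, Neg, One}" and g: "g \<in> nodes ?C" and g': "g' \<in> nodes ?C"
            and c: "tn ?C g = t \<and> tn ?C g' = t \<and> lab ?C g = l \<and> lab ?C g' = l"
          have gC: "g \<in> nodes C" "g \<noteq> h'" "g' \<in> nodes C" "g' \<noteq> h'" using g g' by (auto simp: contract_simps)
          have key: "\<And>g'. g' \<in> nodes C \<Longrightarrow> g' \<noteq> h' \<Longrightarrow> g' \<noteq> h \<Longrightarrow> tn C g' = t \<Longrightarrow> lab C g' = l \<Longrightarrow>
                 lit_or (lab C h) (lab C h') = l \<Longrightarrow> False"
          proof -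
            fix g2 assume a: "g2 \<in> nodes C" "g2 \<noteq> h'" "g2 \<noteq> h" "tn C g2 = t" "lab C g2 = l"
              "lit_or (lab C h) (lab C h') = l"
            show False
            proof (cases "lab C h = l \<or> lab C h' = l")
              case True
              then show False using u1 u2 a l by blast
            next
              case False
              then have "l = One \<and> lab C h \<noteq> One" using a(6) l by (cases "lab C h"; cases "lab C h'"; auto)
              then have "l = One" "lab C h \<noteq> One" by auto
              then show False using o3[OF a(1,4), of h] a th True False by auto
            qed
          qed
          show "g = g'"
          proof (cases "g = h \<or> g' = h")
            case True
            then show ?thesis using key gC c by (auto simp: contract_simps split: if_splits)
          next
            case False
            then show ?thesis using U[of l g g'] l gC c by (auto simp: contract_simps)
          qed
        qed
        have B: "(\<exists>g\<in>nodes ?C. tn ?C g = t \<and> lab ?C g = One) \<longrightarrow>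
              (\<forall>g\<in>nodes ?C. tn ?C g = t \<and> lab ?C g \<noteq> One \<longrightarrow> lab ?C g = Zero)"
        proof (intro impI ballI)
          assume "\<exists>g\<in>nodes ?C. tn ?C g = t \<and> lab ?C g = One"
          then obtain g0 where g0: "g0 \<in> nodes C" "g0 \<noteq> h'" "tn C g0 = t" "lab ?C g0 = One"
            by (auto simp: contract_simps)
          fix g assume g: "g \<in> nodes ?C" "tn ?C g = t \<and> lab ?C g \<noteq> One"
          have gC: "g \<in> nodes C" "g \<noteq> h'" "tn C g = t" using g by (auto simp: contract_simps)
          show "lab ?C g = Zero"
          proof (cases "g0 = h")
            case True
            then have L: "lit_or (lab C h) (lab C h') = One" using g0 by (simp add: contract_simps)
            have "g \<noteq> h" using g True g0 by auto
            then have lg: "lab ?C g = lab C g" "lab C g \<noteq> One" using g by (auto simp: contract_simps)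
            show ?thesis
            proof (cases "lab C h = One \<or> lab C h' = One")
              case True
              then show ?thesis using o1 o2 lg gC by auto
            next
              case False
              then have "(lab C h = Pos \<and> lab C h' = Neg) \<or> (lab C h = Neg \<and> lab C h' = Pos)"
                using L by (simp add: lit_or_cases)
              then have "lab C g \<noteq> Pos" "lab C g \<noteq> Neg"
                using u1[of _ g] u2[of _ g] gC \<open>g \<noteq> h\<close> by auto
              then show ?thesis using lg by (cases "lab C g") auto
            qed
          next
            case False
            then have l0: "lab C g0 = One" using g0 by (simp add: contract_simps)
            have "lab C h = Zero" using o3[OF g0(1,3) l0, of h] u1[of One g0] g0 l0 False th True by auto
            moreover have "lab C h' = Zero" using o3[OF g0(1,3) l0, of h'] u2[of One g0] g0 l0 th True by auto
            ultimately show ?thesis using g gC o3[OF g0(1,3) l0, of g]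
              by (auto simp: contract_simps split: if_splits)
          qed
        qed
        show ?thesis using A B Leaf by simp
      qed
    next
      case (Node l r)
      have D: "\<And>g g'. g \<in> nodes C \<Longrightarrow> g' \<in> nodes C \<Longrightarrow> tn C g = t \<Longrightarrow> tn C g' = t \<Longrightarrow> g \<noteq> g' \<Longrightarrow>
          inp C g \<inter> inp C g' = {}"
        using bspec[OF TD t] Node by simp
      have "\<forall>g\<in>nodes ?C. \<forall>g'\<in>nodes ?C.
              tn ?C g = t \<and> tn ?C g' = t \<and> g \<noteq> g' \<longrightarrow> inp ?C g \<inter> inp ?C g' = {}"
      proof (intro ballI impI)
        fix g g' assume g: "g \<in> nodes ?C" "g' \<in> nodes ?C" "tn ?C g = t \<and> tn ?C g' = t \<and> g \<noteq> g'"
        then have gC: "g \<in> nodes C" "g \<noteq> h'" "g' \<in> nodes C" "g' \<noteq> h'" "tn C g = t" "tn C g' = t" "g \<noteq> g'"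
          by (auto simp: contract_simps)
        show "inp ?C g \<inter> inp ?C g' = {}"
        proof (cases "g = h \<or> g' = h")
          case True
          then have "tn C h' = t" using gC th by auto
          then show ?thesis using True D[of g g'] D[of h' g'] D[of g h'] gC th
            by (auto simp: contract_simps)
        next
          case False
          then show ?thesis using D[of g g'] gC by (auto simp: contract_simps)
        qed
      qed
      then show ?thesis using Node by simp
    qed
  qed
  show ?thesis using resp' TD' f unfolding is_TDD_def by blast
qed

end
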